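(* Let $R:X\leftrightarrow\mathcal{P}Y$ and $S:Y\leftrightarrow\mathcal{P}Z$ be multirelations. Then (1) $(R\ast S)^{\downarrow}=R\ast S^{\downarrow}$, and hence $(R^{\downarrow}\ast S^{\downarrow})^{\downarrow}=R^{\downarrow}\ast S^{\downarrow}$; (2) if $R$ is inner deterministic, then $(R\ast S)^{\uparrow}=R\ast S^{\uparrow}=R^{\uparrow}\ast S^{\uparrow}$.
   Context: A multirelation $R:X\leftrightarrow\mathcal{P}Y$ is a subset of $X\times\mathcal{P}(Y)$. $R^{\uparrow}=\{(a,A)\mid\exists B.\ (a,B)\in R\wedge B\subseteq A\}$, $R^{\downarrow}=\{(a,A)\mid\exists B.\ (a,B)\in R\wedge A\subseteq B\}$. $R$ is inner deterministic if every $(a,B)\in R$ has $B$ a singleton. The Peleg composition is $R\ast S=\{(a,C)\mid\exists B.\ (a,B)\in R\wedge\exists f:Y\to\mathcal{P}Z.\ (\forall b\in B.\ (b,f(b))\in S)\wedge C=\bigcup_{b\in B}f(b)\}$. *)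

theory Defs
  imports Main
begin

type_synonym ('a, 'b) mrel = "('a \<times> 'b set) set"

definition up_closure :: "('a, 'b) mrel \<Rightarrow> ('a, 'b) mrel" where
  "up_closure R = {(a, A). \<exists>B. (a, B) \<in> R \<and> B \<subseteq> A}"

definition down_closure :: "('a, 'b) mrel \<Rightarrow> ('a, 'b) mrel" where
  "down_closure R = {(a, A). \<exists>B. (a, B) \<in> R \<and> A \<subseteq> B}"

definition inner_deterministic :: "('a, 'b) mrel \<Rightarrow> bool" where
  "inner_deterministic R \<longleftrightarrow> (\<forall>(a, B) \<in> R. \<exists>b. B = {b})"

definition peleg_comp :: "('a, 'b) mrel \<Rightarrow> ('b, 'c) mrel \<Rightarrow> ('a, 'c) mrel" where
  "peleg_comp R S = {(a, C). \<exists>B. (a, B) \<in> R \<and>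
      (\<exists>f :: 'b \<Rightarrow> 'c set. (\<forall>b \<in> B. (b, f b) \<in> S) \<and> C = (\<Union>b \<in> B. f b))}"

end

theory Submission
  imports Defs
begin

lemma down1: "down_closure (peleg_comp R S) = peleg_comp R (down_closure S)"
proof (rule set_eqI, clarify)
  fix a C
  show "((a, C) \<in> down_closure (peleg_comp R S)) = ((a, C) \<in> peleg_comp R (down_closure S))"
  proof
    assume "(a, C) \<in> down_closure (peleg_comp R S)"
    then obtain B f where B: "(a, B) \<in> R" "\<forall>b\<in>B. (b, f b) \<in> S" "C \<subseteq> (\<Union>b\<in>B. f b)"
      unfolding down_closure_def peleg_comp_def by blast
    have "\<forall>b\<in>B. (b, f b \<inter> C) \<in> down_closure S" using B unfolding down_closure_def by blast
    moreover have "C = (\<Union>b\<in>B. f b \<inter> C)" using B by blast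
    ultimately show "(a, C) \<in> peleg_comp R (down_closure S)"
      unfolding peleg_comp_def using B(1)
      by (auto intro!: exI[of _ B] exI[of _ "\<lambda>b. f b \<inter> C"])
  next
    assume "(a, C) \<in> peleg_comp R (down_closure S)"
    then obtain B g where B: "(a, B) \<in> R" "\<forall>b\<in>B. (b, g b) \<in> down_closure S" "C = (\<Union>b\<in>B. g b)"
      unfolding peleg_comp_def by blast
    have "\<forall>b\<in>B. \<exists>D. (b, D) \<in> S \<and> g b \<subseteq> D" using B(2) unfolding down_closure_def by blast
    then obtain f where f: "\<forall>b\<in>B. (b, f b) \<in> S \<and> g b \<subseteq> f b" by metis
    have "(a, \<Union>b\<in>B. f b) \<in> peleg_comp R S" unfolding peleg_comp_def using B(1) f by blast
    moreover have "C \<subseteq> (\<Union>b\<in>B. f b)" using B(3) f by blast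
    ultimately show "(a, C) \<in> down_closure (peleg_comp R S)" unfolding down_closure_def by blast
  qed
qed

lemma down_idem: "down_closure (down_closure S) = down_closure S"
  unfolding down_closure_def by blast

lemma up1:
  assumes "inner_deterministic R"
  shows "up_closure (peleg_comp R S) = peleg_comp R (up_closure S)"
proof (rule set_eqI, clarify)
  fix a C
  show "((a, C) \<in> up_closure (peleg_comp R S)) = ((a, C) \<in> peleg_comp R (up_closure S))"
  proof
    assume "(a, C) \<in> up_closure (peleg_comp R S)"
    then obtain B f where B: "(a, B) \<in> R" "\<forall>b\<in>B. (b, f b) \<in> S" "(\<Union>b\<in>B. f b) \<subseteq> C"
      unfolding up_closure_def peleg_comp_def by blast
    from assms B(1) obtain b where b: "B = {b}" unfolding inner_deterministic_def by blast
    have "(b, C) \<in> up_closure S" using B b unfolding up_closure_def by auto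
    then show "(a, C) \<in> peleg_comp R (up_closure S)"
      unfolding peleg_comp_def using B(1) b
      by (auto intro!: exI[of _ "{b}"] exI[of _ "\<lambda>_. C"])
  next
    assume "(a, C) \<in> peleg_comp R (up_closure S)"
    then obtain B g where B: "(a, B) \<in> R" "\<forall>b\<in>B. (b, g b) \<in> up_closure S" "C = (\<Union>b\<in>B. g b)"
      unfolding peleg_comp_def by blast
    from assms B(1) obtain b where b: "B = {b}" unfolding inner_deterministic_def by blast
    obtain D where D: "(b, D) \<in> S" "D \<subseteq> g b" using B(2) b unfolding up_closure_def by auto
    have "(a, D) \<in> peleg_comp R S" unfolding peleg_comp_def using B(1) b D
      by (auto intro!: exI[of _ "{b}"] exI[of _ "\<lambda>_. D"])
    then show "(a, C) \<in> up_closure (peleg_comp R S)" using D B(3) b unfolding up_closure_def by auto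
  qed
qed

lemma up2:
  assumes "inner_deterministic R"
  shows "peleg_comp R (up_closure S) = peleg_comp (up_closure R) (up_closure S)"
proof (rule set_eqI, clarify)
  fix a C
  show "((a, C) \<in> peleg_comp R (up_closure S)) = ((a, C) \<in> peleg_comp (up_closure R) (up_closure S))"
  proof
    assume "(a, C) \<in> peleg_comp R (up_closure S)"
    moreover have "R \<subseteq> up_closure R" unfolding up_closure_def by blast
    ultimately show "(a, C) \<in> peleg_comp (up_closure R) (up_closure S)"
      unfolding peleg_comp_def by blast
  next
    assume "(a, C) \<in> peleg_comp (up_closure R) (up_closure S)"
    then obtain B g where B: "(a, B) \<in> up_closure R" "\<forall>b\<in>B. (b, g b) \<in> up_closure S" "C = (\<Union>b\<in>B. g b)"
      unfolding peleg_comp_def by blast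
    obtain B0 where B0: "(a, B0) \<in> R" "B0 \<subseteq> B" using B(1) unfolding up_closure_def by blast
    from assms B0(1) obtain b where b: "B0 = {b}" unfolding inner_deterministic_def by blast
    have bB: "b \<in> B" using B0 b by auto
    obtain D where D: "(b, D) \<in> S" "D \<subseteq> g b" using B(2) bB unfolding up_closure_def by auto
    have "D \<subseteq> C" using D B(3) bB by blast
    then have "(b, C) \<in> up_closure S" using D unfolding up_closure_def by blast
    then show "(a, C) \<in> peleg_comp R (up_closure S)"
      unfolding peleg_comp_def using B0(1) b
      by (auto intro!: exI[of _ "{b}"] exI[of _ "\<lambda>_. C"])
  qed
qed

theorem lemma4p8:
  fixes R :: "('a, 'b) mrel" and S :: "('b, 'c) mrel"
  shows "down_closure (peleg_comp R S) = peleg_comp R (down_closure S)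
         \<and> down_closure (peleg_comp (down_closure R) (down_closure S))
             = peleg_comp (down_closure R) (down_closure S)
         \<and> (inner_deterministic R \<longrightarrow>
              up_closure (peleg_comp R S) = peleg_comp R (up_closure S)
            \<and> peleg_comp R (up_closure S) = peleg_comp (up_closure R) (up_closure S))"
  using down1 down_idem up1 up2 by metis

end
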